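(* Let $n\ge1$. For every $f\in L^2([0,1]^n)$ and every $k\in\{1,\ldots,n\}$, $I(f^d,k)=I(f,n-k+1)$. In particular, if $f$ is self-dual, then $I(f,k)=I(f,n-k+1)$.
   Context: $L^2([0,1]^n)$ is the space of square integrable real functions on $[0,1]^n$ modulo equality almost everywhere. For $\mathbf{x}\in[0,1]^n$, $x_{(1)}\le\cdots\le x_{(n)}$ are its coordinates in ascending order, with $x_{(0)}=0$, $x_{(n+1)}=1$. The influence index is $I(f,k)=-(n+1)(n+2)\int_{[0,1]^n}f(\mathbf{x})\,\big(x_{(k+1)}-2x_{(k)}+x_{(k-1)}\big)\,d\mathbf{x}$. The dual of $f$ is $f^d(\mathbf{x})=1-f(\mathbf{1}-\mathbf{x})$, where $\mathbf{1}=(1,\ldots,1)$; $f$ is self-dual if $f^d=f$. *)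

theory Defs
  imports "HOL-Analysis.Analysis"
begin

text \<open>Points of [0,1]^n are functions nat => real, extensional on {..<n}
  (coordinates indexed 0..n-1). The measure is the product of Lebesgue
  measure on [0,1], i.e. Lebesgue measure on the cube.\<close>

definition cube_measure :: "nat \<Rightarrow> (nat \<Rightarrow> real) measure" where
  "cube_measure n = PiM {..<n} (\<lambda>_. restrict_space lborel {0..1})"

definition ord_stat :: "nat \<Rightarrow> (nat \<Rightarrow> real) \<Rightarrow> nat \<Rightarrow> real" where
  "ord_stat n x k =
     (if k = 0 then 0 else if k \<le> n then sort (map x [0..<n]) ! (k - 1) else 1)"

definition square_integrable_cube :: "nat \<Rightarrow> ((nat \<Rightarrow> real) \<Rightarrow> real) \<Rightarrow> bool" where
  "square_integrable_cube n f \<longleftrightarrow>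
     f \<in> borel_measurable (cube_measure n) \<and> integrable (cube_measure n) (\<lambda>x. (f x)\<^sup>2)"

definition influence :: "nat \<Rightarrow> ((nat \<Rightarrow> real) \<Rightarrow> real) \<Rightarrow> nat \<Rightarrow> real" where
  "influence n f k =
     - (real n + 1) * (real n + 2) *
       (\<integral>x. f x * (ord_stat n x (k + 1) - 2 * ord_stat n x k + ord_stat n x (k - 1))
          \<partial>cube_measure n)"

definition dual_fun :: "nat \<Rightarrow> ((nat \<Rightarrow> real) \<Rightarrow> real) \<Rightarrow> (nat \<Rightarrow> real) \<Rightarrow> real" where
  "dual_fun n f x = 1 - f (\<lambda>i\<in>{..<n}. 1 - x i)"

text \<open>Self-duality as equality in L^2, i.e. almost everywhere on the cube.\<close>
definition self_dual :: "nat \<Rightarrow> ((nat \<Rightarrow> real) \<Rightarrow> real) \<Rightarrow> bool" where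
  "self_dual n f \<longleftrightarrow> (AE x in cube_measure n. dual_fun n f x = f x)"

end

theory Submission
  imports Defs "HOL-Probability.Probability"
begin

lemma sort_reflect:
  fixes xs :: "real list"
  shows "sort (map (\<lambda>v. 1 - v) xs) = map (\<lambda>v. 1 - v) (rev (sort xs))"
proof (rule properties_for_sort)
  show "mset (map (\<lambda>v. 1 - v) (rev (sort xs))) = mset (map (\<lambda>v. 1 - v) xs)"
    by (simp add: mset_map)
  have "sorted_wrt (\<le>) (sort xs)" by simp
  then show "sorted (map (\<lambda>v. 1 - v) (rev (sort xs)))"
    by (simp add: sorted_map sorted_wrt_rev)
qed

lemma ord_stat_reflect:
  assumes "j \<le> n + 1"
  shows "ord_stat n (\<lambda>i\<in>{..<n}. 1 - x i) j = 1 - ord_stat n x (n + 1 - j)"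
proof -
  have m: "map (\<lambda>i\<in>{..<n}. 1 - x i) [0..<n] = map (\<lambda>v. 1 - v) (map x [0..<n])"
    by simp
  show ?thesis
  proof (cases "j = 0 \<or> j = n + 1")
    case True then show ?thesis using assms by (auto simp: ord_stat_def)
  next
    case False
    then have j: "1 \<le> j" "j \<le> n" using assms by auto
    have "ord_stat n (\<lambda>i\<in>{..<n}. 1 - x i) j = 1 - rev (sort (map x [0..<n])) ! (j - 1)"
      using j unfolding ord_stat_def m sort_reflect by (simp add: rev_nth)
    also have "\<dots> = 1 - sort (map x [0..<n]) ! (n - j)"
      using j by (simp add: rev_nth)
    also have "\<dots> = 1 - ord_stat n x (n + 1 - j)"
      using j by (simp add: ord_stat_def)
    finally show ?thesis .
  qed
qed

definition cnt :: "nat \<Rightarrow> (nat \<Rightarrow> real) \<Rightarrow> real \<Rightarrow> nat" where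
  "cnt n x t = card {i\<in>{..<n}. x i \<le> t}"

lemma sorted_nth_le_iff:
  fixes ys :: "'a::linorder list"
  assumes "sorted ys" "1 \<le> j" "j \<le> length ys"
  shows "ys ! (j - 1) \<le> t \<longleftrightarrow> j \<le> card {i. i < length ys \<and> ys ! i \<le> t}"
proof (rule iffI)
  assume h: "ys ! (j - 1) \<le> t"
  have "{..<j} \<subseteq> {i. i < length ys \<and> ys ! i \<le> t}"
  proof
    fix i assume "i \<in> {..<j}"
    then have "ys ! i \<le> ys ! (j - 1)" using assms by (intro sorted_nth_mono) auto
    then show "i \<in> {i. i < length ys \<and> ys ! i \<le> t}" using h \<open>i \<in> {..<j}\<close> assms by auto
  qed
  moreover have "finite {i. i < length ys \<and> ys ! i \<le> t}" by simp
  ultimately show "j \<le> card {i. i < length ys \<and> ys ! i \<le> t}"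
    using card_mono[of "{i. i < length ys \<and> ys ! i \<le> t}" "{..<j}"] by simp
next
  assume h: "j \<le> card {i. i < length ys \<and> ys ! i \<le> t}"
  show "ys ! (j - 1) \<le> t"
  proof (rule ccontr)
    assume c: "\<not> ys ! (j - 1) \<le> t"
    have "{i. i < length ys \<and> ys ! i \<le> t} \<subseteq> {..<j-1}"
    proof
      fix i assume i: "i \<in> {i. i < length ys \<and> ys ! i \<le> t}"
      show "i \<in> {..<j-1}"
      proof (rule ccontr)
        assume "i \<notin> {..<j - 1}"
        then have "ys ! (j-1) \<le> ys ! i" using assms i by (intro sorted_nth_mono) auto
        then show False using i c by auto
      qed
    qed
    then have "card {i. i < length ys \<and> ys ! i \<le> t} \<le> j - 1"
      by (metis card_lessThan card_mono finite_lessThan)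
    then show False using h assms by auto
  qed
qed

lemma a1: "card {i\<in>{..<n}. x i \<le> (t::real)} = length (filter (\<lambda>v. v \<le> t) (map x [0..<n]))"
proof -
  have "length (filter (\<lambda>v. v \<le> t) (map x [0..<n])) = length (filter (\<lambda>i. x i \<le> t) [0..<n])"
    by (simp add: filter_map comp_def)
  also have "\<dots> = card ({i. x i \<le> t} \<inter> set [0..<n])"
    by (rule distinct_length_filter) simp
  also have "{i. x i \<le> t} \<inter> set [0..<n] = {i\<in>{..<n}. x i \<le> t}" by auto
  finally show ?thesis by simp
qed
lemma a2: "length (filter (\<lambda>v. v \<le> t) (xs::real list)) = length (filter (\<lambda>v. v \<le> t) (sort xs))"
proof -
  have "mset (filter (\<lambda>v. v \<le> t) (sort xs)) = mset (filter (\<lambda>v. v \<le> t) xs)" by simp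
  then show ?thesis by (metis size_mset)
qed
lemma a3: "1 \<le> j \<Longrightarrow> j \<le> n \<Longrightarrow> sort (map x [0..<n]) ! (j - 1) \<in> set (map (x::nat\<Rightarrow>real) [0..<n])"
proof -
  assume "1 \<le> j" "j \<le> n"
  then have "j - 1 < length (sort (map x [0..<n]))" by simp
  then have "sort (map x [0..<n]) ! (j - 1) \<in> set (sort (map x [0..<n]))" by (rule nth_mem)
  then show ?thesis by simp
qed

lemma ord_stat_le_iff:
  assumes "1 \<le> j" "j \<le> n"
  shows "ord_stat n x j \<le> t \<longleftrightarrow> j \<le> cnt n x t"
proof -
  let ?ys = "sort (map x [0..<n])"
  have "cnt n x t = length (filter (\<lambda>v. v \<le> t) (map x [0..<n]))"
    unfolding cnt_def by (rule a1)
  also have "\<dots> = length (filter (\<lambda>v. v \<le> t) ?ys)"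
    by (rule a2)
  also have "\<dots> = card {i. i < length ?ys \<and> ?ys ! i \<le> t}"
    by (simp add: length_filter_conv_card)
  finally have c: "cnt n x t = card {i. i < length ?ys \<and> ?ys ! i \<le> t}" .
  have "?ys ! (j - 1) \<le> t \<longleftrightarrow> j \<le> card {i. i < length ?ys \<and> ?ys ! i \<le> t}"
    using assms by (intro sorted_nth_le_iff) auto
  then show ?thesis using assms unfolding c ord_stat_def by simp
qed

lemma ord_stat_range:
  assumes "\<And>i. i < n \<Longrightarrow> x i \<in> {0..1}"
  shows "ord_stat n x j \<in> {0..1}"
  using assms a3[of j n x] unfolding ord_stat_def by auto


abbreviation "U \<equiv> restrict_space lborel {0..1::real}"

lemma prob_U: "prob_space U"
  by (rule prob_spaceI) (simp add: space_restrict_space emeasure_restrict_space)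

lemma prob_M: "prob_space (cube_measure n)"
  unfolding cube_measure_def by (rule prob_space_PiM) (rule prob_U)

lemma space_M: "space (cube_measure n) = PiE {..<n} (\<lambda>_. {0..1})"
  unfolding cube_measure_def by (simp add: space_PiM space_restrict_space)

lemma cnt_sum: "real (cnt n x t) = (\<Sum>i<n. if x i \<le> t then 1 else 0)"
proof -
  have "{i\<in>{..<n}. x i \<le> t} = {..<n} \<inter> {i. x i \<le> t}" by auto
  then show ?thesis unfolding cnt_def by (simp add: sum.If_cases)
qed

lemma meas_comp: "i < n \<Longrightarrow> (\<lambda>x. x i) \<in> borel_measurable (cube_measure n)"
proof -
  assume i: "i < n"
  have "(\<lambda>x. x) \<in> borel_measurable U" by (rule measurable_restrict_space1) simp
  have "(\<lambda>x. (\<lambda>y. y) (x i)) \<in> borel_measurable (PiM {..<n} (\<lambda>_. U))"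
    using measurable_compose[OF measurable_component_singleton[of i "{..<n}" "\<lambda>_. U"] \<open>(\<lambda>x. x) \<in> borel_measurable U\<close>] i by simp
  then show ?thesis unfolding cube_measure_def by simp
qed

lemma meas_cnt: "(\<lambda>x. real (cnt n x t)) \<in> borel_measurable (cube_measure n)"
  unfolding cnt_sum
proof (intro borel_measurable_sum)
  fix i assume "i \<in> {..<n}"
  then have [measurable]: "(\<lambda>x. x i) \<in> borel_measurable (cube_measure n)" by (simp add: meas_comp)
  show "(\<lambda>x. if x i \<le> t then 1 else 0::real) \<in> borel_measurable (cube_measure n)" by measurable
qed


lemma meas_ord: "(\<lambda>x. ord_stat n x j) \<in> borel_measurable (cube_measure n)"
proof (cases "1 \<le> j \<and> j \<le> n")
  case False
  then have "(\<lambda>x. ord_stat n x j) = (\<lambda>x. if j = 0 then 0 else 1)"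
    by (auto simp: ord_stat_def fun_eq_iff)
  then show ?thesis by simp
next
  case True
  show ?thesis
  proof (rule borel_measurable_iff_le[THEN iffD2], intro allI)
    fix a
    have [measurable]: "(\<lambda>x. real (cnt n x a)) \<in> borel_measurable (cube_measure n)" by (rule meas_cnt)
    have "Measurable.pred (cube_measure n) (\<lambda>w. real j \<le> real (cnt n w a))" by measurable
    then have "{w \<in> space (cube_measure n). real j \<le> real (cnt n w a)} \<in> sets (cube_measure n)"
      by (simp add: pred_def)
    moreover have "{w \<in> space (cube_measure n). ord_stat n w j \<le> a} = {w \<in> space (cube_measure n). real j \<le> real (cnt n w a)}"
      using True by (auto simp: ord_stat_le_iff)
    ultimately show "{w \<in> space (cube_measure n). ord_stat n w j \<le> a} \<in> sets (cube_measure n)" by simp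
  qed
qed

lemma space_M_comp: "x \<in> space (cube_measure n) \<Longrightarrow> i < n \<Longrightarrow> x i \<in> {0..1}"
  unfolding space_M by (simp add: PiE_iff)

lemma ord_stat_range_M: "x \<in> space (cube_measure n) \<Longrightarrow> ord_stat n x j \<in> {0..1}"
  by (rule ord_stat_range) (rule space_M_comp)

lemma integrable_ord: "integrable (cube_measure n) (\<lambda>x. ord_stat n x j)"
proof -
  interpret prob_space "cube_measure n" by (rule prob_M)
  show ?thesis
  proof (rule integrable_const_bound[where B=1])
    show "AE x in cube_measure n. norm (ord_stat n x j) \<le> 1"
    proof (rule AE_I2)
      fix x assume "x \<in> space (cube_measure n)"
      then have "ord_stat n x j \<in> {0..1}" by (rule ord_stat_range_M)
      then show "norm (ord_stat n x j) \<le> 1" by simp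
    qed
  qed (rule meas_ord)
qed

lemma lborel_reflect: "distr lborel borel (\<lambda>x::real. 1 - x) = lborel"
proof -
  have h: "lborel = density (distr lborel borel (\<lambda>x::real. 1 + -1 * x)) (\<lambda>_. ennreal \<bar>-1\<bar>)"
    by (rule lborel_real_affine) simp
  have e: "density (distr lborel borel (\<lambda>x::real. 1 + -1 * x)) (\<lambda>_. ennreal \<bar>-1\<bar>) = distr lborel borel (\<lambda>x::real. 1 - x)"
    by (simp add: density_1)
  show ?thesis by (rule trans[OF e[symmetric] h[symmetric]])
qed

lemma distr_U: "distr U U (\<lambda>t. 1 - t) = U"
proof (rule measure_eqI)
  show "sets (distr U U (\<lambda>t. 1 - t)) = sets U" by simp
  have g: "(\<lambda>t::real. 1 - t) \<in> measurable U U"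
    by (rule measurable_restrict_space3) auto
  fix A assume "A \<in> sets (distr U U (\<lambda>t. 1 - t))"
  then have A: "A \<in> sets U" by simp
  then have A': "A \<subseteq> {0..1}" "A \<in> sets lborel"
    using sets_restrict_space_iff[of "{0..1::real}" lborel A] by auto
  have pre: "(\<lambda>t. 1 - t) -` A \<inter> space U = (\<lambda>t::real. 1 - t) -` A"
  proof (intro set_eqI iffI)
    fix t assume "t \<in> (\<lambda>t. 1 - t) -` A \<inter> space U"
    then show "t \<in> (\<lambda>t::real. 1 - t) -` A" by blast
  next
    fix t assume t: "t \<in> (\<lambda>t::real. 1 - t) -` A"
    then have "1 - t \<in> A" by simp
    then have "1 - t \<in> {0..1}" using A'(1) by blast
    then have "t \<in> {0..1}" by simp
    then show "t \<in> (\<lambda>t. 1 - t) -` A \<inter> space U" using t by (simp add: space_restrict_space)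
  qed
  have "emeasure (distr U U (\<lambda>t. 1 - t)) A = emeasure U ((\<lambda>t. 1 - t) -` A \<inter> space U)"
    by (rule emeasure_distr[OF g A])
  also have "\<dots> = emeasure U ((\<lambda>t::real. 1 - t) -` A)" by (simp only: pre)
  also have "\<dots> = emeasure lborel ((\<lambda>t::real. 1 - t) -` A)"
    using A'(1) by (intro emeasure_restrict_space) auto
  also have "\<dots> = emeasure (distr lborel borel (\<lambda>x::real. 1 - x)) A"
    using A' by (subst emeasure_distr) auto
  also have "\<dots> = emeasure lborel A" by (simp add: lborel_reflect)
  also have "\<dots> = emeasure U A"
    using A'(1) by (intro emeasure_restrict_space[symmetric]) auto
  finally show "emeasure (distr U U (\<lambda>t. 1 - t)) A = emeasure U A" .
qed

definition rfl :: "nat \<Rightarrow> (nat \<Rightarrow> real) \<Rightarrow> (nat \<Rightarrow> real)" where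
  "rfl n x = (\<lambda>i\<in>{..<n}. 1 - x i)"

lemma distr_M: "distr (cube_measure n) (cube_measure n) (rfl n) = cube_measure n"
proof -
  have pp: "product_prob_space (\<lambda>_. U)" by (rule product_prob_spaceI) (rule prob_U)
  have "(\<lambda>t::real. 1 - t) \<in> measurable U U"
    by (rule measurable_restrict_space3) auto
  then have "distr (PiM {..<n} (\<lambda>_. U)) (PiM {..<n} (\<lambda>_. U)) (compose {..<n} (\<lambda>t. 1 - t))
      = PiM {..<n} (\<lambda>i. distr U U (\<lambda>t. 1 - t))"
    by (intro distr_PiM_finite_prob_space pp) auto
  moreover have "compose {..<n} (\<lambda>t. 1 - t) = rfl n"
    by (simp add: fun_eq_iff compose_def rfl_def)
  ultimately show ?thesis unfolding cube_measure_def by (simp add: distr_U)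
qed

lemma rfl_meas: "rfl n \<in> measurable (cube_measure n) (cube_measure n)"
proof -
  have "distr (cube_measure n) (cube_measure n) (rfl n) = cube_measure n" by (rule distr_M)
  show ?thesis unfolding rfl_def cube_measure_def
  proof (rule measurable_restrict)
    fix i assume i: "i \<in> {..<n}"
    have [measurable]: "(\<lambda>x. x i) \<in> borel_measurable (cube_measure n)" using i by (simp add: meas_comp)
    have m1: "(\<lambda>x. 1 - x i) \<in> measurable (cube_measure n) lborel"
      unfolding measurable_lborel2 by measurable
    show "(\<lambda>x. 1 - x i) \<in> measurable (PiM {..<n} (\<lambda>_. U)) U"
    proof (rule measurable_restrict_space2)
      show "(\<lambda>x. 1 - x i) \<in> measurable (PiM {..<n} (\<lambda>_. U)) lborel"
        using m1 unfolding cube_measure_def .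
    next
      show "(\<lambda>x. 1 - x i) \<in> space (PiM {..<n} (\<lambda>_. U)) \<rightarrow> {0..1}"
      proof
        fix x assume "x \<in> space (PiM {..<n} (\<lambda>_. U))"
        then have "x i \<in> {0..1}" using i by (simp add: space_PiM PiE_iff space_restrict_space)
        then show "1 - x i \<in> {0..1}" by simp
      qed
    qed
  qed
qed

lemma integral_refl:
  fixes h :: "(nat \<Rightarrow> real) \<Rightarrow> real"
  assumes "h \<in> borel_measurable (cube_measure n)"
  shows "(\<integral>x. h (rfl n x) \<partial>cube_measure n) = (\<integral>x. h x \<partial>cube_measure n)"
proof -
  have "(\<integral>x. h x \<partial>cube_measure n) = (\<integral>x. h x \<partial>distr (cube_measure n) (cube_measure n) (rfl n))"
    by (simp add: distr_M)
  also have "\<dots> = (\<integral>x. h (rfl n x) \<partial>cube_measure n)"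
    by (rule integral_distr[OF rfl_meas assms])
  finally show ?thesis by simp
qed


definition box :: "nat \<Rightarrow> real \<Rightarrow> nat set \<Rightarrow> (nat \<Rightarrow> real) set" where
  "box n t S = PiE {..<n} (\<lambda>i. if i \<in> S then {0..t} else {t<..1})"

lemma box_sets:
  assumes t: "t \<in> {0..1}"
  shows "box n t S \<in> sets (cube_measure n)"
  unfolding box_def cube_measure_def
proof (rule sets_PiM_I_finite)
  fix i assume "i \<in> {..<n}"
  show "(if i \<in> S then {0..t} else {t<..1}) \<in> sets U"
    using t by (auto simp: sets_restrict_space_iff)
qed simp

lemma prod_if_pow:
  fixes t :: real
  assumes "S \<subseteq> {..<n}"
  shows "(\<Prod>i<n. if i \<in> S then t else 1 - t) = t ^ card S * (1 - t) ^ (n - card S)"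
proof -
  have "(\<Prod>i<n. if i \<in> S then t else 1 - t) = (\<Prod>i\<in>{..<n} \<inter> {i. i \<in> S}. t) * (\<Prod>i\<in>{..<n} \<inter> - {i. i \<in> S}. 1 - t)"
    by (rule prod.If_cases) simp
  also have "{..<n} \<inter> - {i. i \<in> S} = {..<n} - S" by blast
  also have "{..<n} \<inter> {i. i \<in> S} = S" using assms by blast
  moreover have "card ({..<n} - S) = n - card S"
    using assms by (simp add: card_Diff_subset finite_subset)
  ultimately show ?thesis using assms by (simp add: finite_subset)
qed

lemma box_meas:
  assumes t: "t \<in> {0..1}" and S: "S \<subseteq> {..<n}"
  shows "emeasure (cube_measure n) (box n t S) = ennreal (t ^ card S * (1 - t) ^ (n - card S))"
proof -
  interpret pp: product_prob_space "\<lambda>_. U" by (rule product_prob_spaceI) (rule prob_U)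
  have "emeasure (cube_measure n) (box n t S) =
        (\<Prod>i<n. emeasure U (if i \<in> S then {0..t} else {t<..1}))"
    unfolding box_def cube_measure_def
    by (rule pp.emeasure_PiM) (use t in \<open>auto simp: sets_restrict_space_iff\<close>)
  also have "\<dots> = (\<Prod>i<n. ennreal (if i \<in> S then t else 1 - t))"
  proof (rule prod.cong)
    fix i assume "i \<in> {..<n}"
    show "emeasure U (if i \<in> S then {0..t} else {t<..1}) = ennreal (if i \<in> S then t else 1 - t)"
    proof (cases "i \<in> S")
      case True
      have "emeasure U {0..t} = emeasure lborel {0..t}"
        using t by (intro emeasure_restrict_space) auto
      then show ?thesis using True t by simp
    next
      case False
      have "emeasure U {t<..1} = emeasure lborel {t<..1}"
        using t by (intro emeasure_restrict_space) auto
      then show ?thesis using False t by simp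
    qed
  qed simp
  also have "\<dots> = ennreal (\<Prod>i<n. if i \<in> S then t else 1 - t)"
    by (rule prod_ennreal) (use t in auto)
  also have "\<dots> = ennreal (t ^ card S * (1 - t) ^ (n - card S))"
    by (simp add: prod_if_pow[OF S])
  finally show ?thesis .
qed

lemma box_char:
  assumes "S \<subseteq> {..<n}" "t \<in> {0..1}"
  shows "x \<in> box n t S \<longleftrightarrow> x \<in> space (cube_measure n) \<and> {i\<in>{..<n}. x i \<le> t} = S"
proof
  assume x: "x \<in> box n t S"
  have xi: "\<And>i. i < n \<Longrightarrow> x i \<in> (if i \<in> S then {0..t} else {t<..1})"
    using x unfolding box_def by (auto simp: PiE_iff)
  have ext: "x \<in> extensional {..<n}" using x unfolding box_def by (simp add: PiE_iff)
  have "\<And>i. i < n \<Longrightarrow> x i \<in> {0..1}"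
  proof -
    fix i assume "i < n"
    then have "x i \<in> (if i \<in> S then {0..t} else {t<..1})" by (rule xi)
    then show "x i \<in> {0..1}" using assms(2) by (auto split: if_splits)
  qed
  then have "x \<in> space (cube_measure n)" using ext unfolding space_M by (simp add: PiE_iff)
  moreover have "{i\<in>{..<n}. x i \<le> t} = S"
  proof (intro set_eqI iffI)
    fix i assume "i \<in> {i\<in>{..<n}. x i \<le> t}"
    then have "i < n" "x i \<le> t" by auto
    then show "i \<in> S" using xi[of i] by (auto split: if_splits)
  next
    fix i assume "i \<in> S"
    then have "i < n" using assms(1) by auto
    then show "i \<in> {i\<in>{..<n}. x i \<le> t}" using xi[of i] \<open>i \<in> S\<close> by auto
  qed
  ultimately show "x \<in> space (cube_measure n) \<and> {i\<in>{..<n}. x i \<le> t} = S" by blast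
next
  assume h: "x \<in> space (cube_measure n) \<and> {i\<in>{..<n}. x i \<le> t} = S"
  have ext: "x \<in> extensional {..<n}" using h unfolding space_M by (simp add: PiE_iff)
  have "\<And>i. i \<in> {..<n} \<Longrightarrow> x i \<in> (if i \<in> S then {0..t} else {t<..1})"
  proof -
    fix i assume i: "i \<in> {..<n}"
    then have "x i \<in> {0..1}" using h space_M_comp[of x n i] by auto
    moreover have "i \<in> S \<longleftrightarrow> x i \<le> t" using h i by auto
    ultimately show "x i \<in> (if i \<in> S then {0..t} else {t<..1})" by auto
  qed
  then show "x \<in> box n t S" unfolding box_def using ext by (simp add: PiE_iff)
qed

lemma cnt_lt_union:
  assumes t: "t \<in> {0..1}"
  shows "{x\<in>space (cube_measure n). cnt n x t < j} = (\<Union>S\<in>{S. S \<subseteq> {..<n} \<and> card S < j}. box n t S)"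
proof (intro set_eqI iffI)
  fix x assume "x \<in> {x\<in>space (cube_measure n). cnt n x t < j}"
  then have xx: "x \<in> space (cube_measure n) \<and> cnt n x t < j" by (rule CollectD)
  then have x: "x \<in> space (cube_measure n)" "card {i\<in>{..<n}. x i \<le> t} < j" unfolding cnt_def by blast+
  have sub: "{i\<in>{..<n}. x i \<le> t} \<subseteq> {..<n}" by blast
  have bc: "x \<in> box n t {i\<in>{..<n}. x i \<le> t} \<longleftrightarrow> x \<in> space (cube_measure n) \<and> {i\<in>{..<n}. x i \<le> t} = {i\<in>{..<n}. x i \<le> t}"
    by (rule box_char[OF sub t])
  have xb: "x \<in> box n t {i\<in>{..<n}. x i \<le> t}" using x(1) by (simp only: bc simp_thms)
  have mem: "{i\<in>{..<n}. x i \<le> t} \<in> {S. S \<subseteq> {..<n} \<and> card S < j}" using sub x(2) by (intro CollectI conjI)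
  show "x \<in> (\<Union>S\<in>{S. S \<subseteq> {..<n} \<and> card S < j}. box n t S)" using mem xb by (rule UN_I)
next
  fix x assume "x \<in> (\<Union>S\<in>{S. S \<subseteq> {..<n} \<and> card S < j}. box n t S)"
  then obtain S where S: "S \<subseteq> {..<n}" "card S < j" "x \<in> box n t S" by blast
  then have "x \<in> space (cube_measure n) \<and> {i\<in>{..<n}. x i \<le> t} = S" using box_char[OF S(1) t] by blast
  then have "x \<in> space (cube_measure n)" "cnt n x t = card S" unfolding cnt_def by blast+
  then show "x \<in> {x\<in>space (cube_measure n). cnt n x t < j}" using S(2) by (intro CollectI) simp
qed

definition pb :: "nat \<Rightarrow> nat \<Rightarrow> real \<Rightarrow> real" where
  "pb n m t = real (n choose m) * t ^ m * (1 - t) ^ (n - m)"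

lemma emeasure_cnt_lt:
  assumes t: "t \<in> {0..1}"
  shows "emeasure (cube_measure n) {x\<in>space (cube_measure n). cnt n x t < j} = ennreal (\<Sum>m<j. pb n m t)"
proof -
  define F where "F = {S. S \<subseteq> {..<n} \<and> card S < j}"
  have finF: "finite F" unfolding F_def by (rule finite_subset[of _ "Pow {..<n}"]) auto
  have disj: "disjoint_family_on (box n t) F"
    unfolding disjoint_family_on_def
  proof (intro ballI impI)
    fix S S' assume "S \<in> F" "S' \<in> F" "S \<noteq> S'"
    then have S: "S \<subseteq> {..<n}" "S' \<subseteq> {..<n}" unfolding F_def by simp_all
    show "box n t S \<inter> box n t S' = {}"
    proof (rule ccontr)
      assume "box n t S \<inter> box n t S' \<noteq> {}"
      then obtain y where "y \<in> box n t S" "y \<in> box n t S'" by blast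
      then have "{i\<in>{..<n}. y i \<le> t} = S" "{i\<in>{..<n}. y i \<le> t} = S'"
        using box_char[OF S(1) t, of y] box_char[OF S(2) t, of y] by blast+
      then show False using \<open>S \<noteq> S'\<close> by simp
    qed
  qed
  have "emeasure (cube_measure n) {x\<in>space (cube_measure n). cnt n x t < j} =
        emeasure (cube_measure n) (\<Union>S\<in>F. box n t S)"
    unfolding F_def by (simp only: cnt_lt_union[OF t])
  also have "\<dots> = (\<Sum>S\<in>F. emeasure (cube_measure n) (box n t S))"
    by (rule sum_emeasure[symmetric]) (use box_sets[OF t] disj finF in auto)
  also have "\<dots> = (\<Sum>S\<in>F. ennreal (t ^ card S * (1 - t) ^ (n - card S)))"
    by (rule sum.cong) (use box_meas[OF t] in \<open>auto simp: F_def\<close>)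
  also have "\<dots> = ennreal (\<Sum>S\<in>F. t ^ card S * (1 - t) ^ (n - card S))"
    by (rule sum_ennreal) (use t in auto)
  also have "(\<Sum>S\<in>F. t ^ card S * (1 - t) ^ (n - card S)) = (\<Sum>m<j. pb n m t)"
  proof -
    have "(\<Sum>S\<in>F. t ^ card S * (1 - t) ^ (n - card S)) =
          (\<Sum>m<j. \<Sum>S\<in>{S. S \<in> F \<and> card S = m}. t ^ card S * (1 - t) ^ (n - card S))"
      by (rule sum.group[symmetric]) (use finF in \<open>auto simp: F_def\<close>)
    also have "\<dots> = (\<Sum>m<j. pb n m t)"
    proof (rule sum.cong)
      fix m assume m: "m \<in> {..<j}"
      have e: "{S. S \<in> F \<and> card S = m} = {S. S \<subseteq> {..<n} \<and> card S = m}"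
        using m unfolding F_def by auto
      have "(\<Sum>S\<in>{S. S \<in> F \<and> card S = m}. t ^ card S * (1 - t) ^ (n - card S))
          = (\<Sum>S\<in>{S. S \<subseteq> {..<n} \<and> card S = m}. t ^ m * (1 - t) ^ (n - m))"
        unfolding e by (rule sum.cong) auto
      also have "\<dots> = real (card {S. S \<subseteq> {..<n} \<and> card S = m}) * (t ^ m * (1 - t) ^ (n - m))"
        by simp
      also have "card {S. S \<subseteq> {..<n} \<and> card S = m} = n choose m"
        using n_subsets[of "{..<n}" m] by simp
      finally show "(\<Sum>S\<in>{S. S \<in> F \<and> card S = m}. t ^ card S * (1 - t) ^ (n - card S)) = pb n m t"
        unfolding pb_def by simp
    qed simp
    finally show ?thesis .
  qed
  finally show ?thesis .
qed


lemma cnt_le_n: "cnt n x t \<le> n"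
proof -
  have "{i\<in>{..<n}. x i \<le> t} \<subseteq> {..<n}" by blast
  then have "card {i\<in>{..<n}. x i \<le> t} \<le> card {..<n::nat}" by (rule card_mono[rotated]) simp
  then show ?thesis unfolding cnt_def by simp
qed

lemma cnt_sum_t: "real (cnt n x t) = (\<Sum>i<n. if x i \<le> t then 1 else 0)"
  by (rule cnt_sum)

lemma meas_cnt_t: "(\<lambda>t. real (cnt n x t)) \<in> borel_measurable lborel"
  unfolding cnt_sum_t by measurable

lemma meas_cnt_pair: "(\<lambda>p. real (cnt n (fst p) (snd p))) \<in> borel_measurable (cube_measure n \<Otimes>\<^sub>M lborel)"
  unfolding cnt_sum
proof (intro borel_measurable_sum)
  fix i assume "i \<in> {..<n}"
  then have [measurable]: "(\<lambda>x. x i) \<in> borel_measurable (cube_measure n)" by (simp add: meas_comp)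
  show "(\<lambda>p. if fst p i \<le> snd p then 1 else 0::real) \<in> borel_measurable (cube_measure n \<Otimes>\<^sub>M lborel)"
    by measurable
qed

lemma s_emeas:
  assumes x: "x \<in> space (cube_measure n)" and j: "j \<le> n + 1"
  shows "emeasure lborel {t\<in>{0..1}. cnt n x t < j} = ennreal (ord_stat n x j)"
proof (cases "j = 0")
  case True
  then show ?thesis by (simp add: ord_stat_def)
next
  case False
  show ?thesis
  proof (cases "j = n + 1")
    case True
    have "{t\<in>{0..1}. cnt n x t < j} = {0..1}"
      using True cnt_le_n[of n x] by (auto simp: less_Suc_eq_le)
    then show ?thesis using True by (simp add: ord_stat_def)
  next
    case False2: False
    have j1: "1 \<le> j" "j \<le> n" using False False2 j by auto
    have r: "ord_stat n x j \<in> {0..1}" using x by (rule ord_stat_range_M)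
    have "{t\<in>{0..1}. cnt n x t < j} = {0..<ord_stat n x j}"
    proof (intro set_eqI iffI)
      fix t assume "t \<in> {t\<in>{0..1}. cnt n x t < j}"
      then have "t \<in> {0..1}" "\<not> j \<le> cnt n x t" by auto
      then show "t \<in> {0..<ord_stat n x j}" using ord_stat_le_iff[OF j1, of x t] by auto
    next
      fix t assume "t \<in> {0..<ord_stat n x j}"
      then have "0 \<le> t" "t < ord_stat n x j" by auto
      then show "t \<in> {t\<in>{0..1}. cnt n x t < j}" using ord_stat_le_iff[OF j1, of x t] r by auto
    qed
    then show ?thesis using r by simp
  qed
qed

lemma sets_cnt_t: "{t\<in>{0..1}. cnt n x t < j} \<in> sets lborel"
proof -
  have [measurable]: "(\<lambda>t. real (cnt n x t)) \<in> borel_measurable lborel" by (rule meas_cnt_t)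
  have "Measurable.pred lborel (\<lambda>t. t \<in> {0..1} \<and> real (cnt n x t) < real j)" by measurable
  then have "{t \<in> space lborel. t \<in> {0..1} \<and> real (cnt n x t) < real j} \<in> sets lborel" by (simp add: pred_def)
  moreover have "{t \<in> space lborel. t \<in> {0..1} \<and> real (cnt n x t) < real j} = {t\<in>{0..1}. cnt n x t < j}" by auto
  ultimately show ?thesis by simp
qed

lemma sets_cnt_x: "{x\<in>space (cube_measure n). cnt n x t < j} \<in> sets (cube_measure n)"
proof -
  have [measurable]: "(\<lambda>x. real (cnt n x t)) \<in> borel_measurable (cube_measure n)" by (rule meas_cnt)
  have "Measurable.pred (cube_measure n) (\<lambda>x. real (cnt n x t) < real j)" by measurable
  then have "{x \<in> space (cube_measure n). real (cnt n x t) < real j} \<in> sets (cube_measure n)" by (simp add: pred_def)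
  then show ?thesis by simp
qed

lemma fubini_step:
  assumes j: "j \<le> n + 1"
  shows "(\<integral>\<^sup>+x. ennreal (ord_stat n x j) \<partial>cube_measure n) =
         (\<integral>\<^sup>+t. ennreal (indicator {0..1} t * (\<Sum>m<j. pb n m t)) \<partial>lborel)"
proof -
  define G where "G = (\<lambda>x t. if t \<in> {0..1} \<and> cnt n x t < j then 1 else (0::ennreal))"
  interpret M: prob_space "cube_measure n" by (rule prob_M)
  interpret P: pair_sigma_finite "cube_measure n" lborel
    by (intro pair_sigma_finite.intro M.sigma_finite_measure_axioms lborel.sigma_finite_measure_axioms)
  have [measurable]: "(\<lambda>p. real (cnt n (fst p) (snd p))) \<in> borel_measurable (cube_measure n \<Otimes>\<^sub>M lborel)"
    by (rule meas_cnt_pair)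
  have Gm: "case_prod G \<in> borel_measurable (cube_measure n \<Otimes>\<^sub>M lborel)"
  proof -
    have "(\<lambda>p. if snd p \<in> {0..1} \<and> real (cnt n (fst p) (snd p)) < real j then 1 else (0::ennreal))
          \<in> borel_measurable (cube_measure n \<Otimes>\<^sub>M lborel)" by measurable
    moreover have "case_prod G = (\<lambda>p. if snd p \<in> {0..1} \<and> real (cnt n (fst p) (snd p)) < real j then 1 else (0::ennreal))"
      by (auto simp: G_def fun_eq_iff)
    ultimately show ?thesis by simp
  qed
  have "(\<integral>\<^sup>+x. ennreal (ord_stat n x j) \<partial>cube_measure n) = (\<integral>\<^sup>+x. (\<integral>\<^sup>+t. G x t \<partial>lborel) \<partial>cube_measure n)"
  proof (rule nn_integral_cong)
    fix x assume x: "x \<in> space (cube_measure n)"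
    have "(\<integral>\<^sup>+t. G x t \<partial>lborel) = (\<integral>\<^sup>+t. indicator {t\<in>{0..1}. cnt n x t < j} t \<partial>lborel)"
      by (rule nn_integral_cong) (simp add: G_def indicator_def)
    also have "\<dots> = emeasure lborel {t\<in>{0..1}. cnt n x t < j}"
      by (rule nn_integral_indicator) (rule sets_cnt_t)
    also have "\<dots> = ennreal (ord_stat n x j)" by (rule s_emeas[OF x j])
    finally show "ennreal (ord_stat n x j) = (\<integral>\<^sup>+t. G x t \<partial>lborel)" by simp
  qed
  also have "\<dots> = (\<integral>\<^sup>+t. (\<integral>\<^sup>+x. G x t \<partial>cube_measure n) \<partial>lborel)"
    by (rule P.Fubini'[OF Gm, symmetric])
  also have "\<dots> = (\<integral>\<^sup>+t. ennreal (indicator {0..1} t * (\<Sum>m<j. pb n m t)) \<partial>lborel)"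
  proof (rule nn_integral_cong)
    fix t :: real
    show "(\<integral>\<^sup>+x. G x t \<partial>cube_measure n) = ennreal (indicator {0..1} t * (\<Sum>m<j. pb n m t))"
    proof (cases "t \<in> {0..1}")
      case True
      have "(\<integral>\<^sup>+x. G x t \<partial>cube_measure n) = (\<integral>\<^sup>+x. indicator {x\<in>space (cube_measure n). cnt n x t < j} x \<partial>cube_measure n)"
        by (rule nn_integral_cong) (use True in \<open>simp add: G_def indicator_def\<close>)
      also have "\<dots> = emeasure (cube_measure n) {x\<in>space (cube_measure n). cnt n x t < j}"
        by (rule nn_integral_indicator) (rule sets_cnt_x)
      also have "\<dots> = ennreal (\<Sum>m<j. pb n m t)" by (rule emeasure_cnt_lt[OF True])
      finally show ?thesis using True by simp
    next
      case False
      then have "(\<lambda>x. G x t) = (\<lambda>x. 0)" unfolding G_def by (intro ext) (auto simp del: atLeastAtMost_iff)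
      then show ?thesis using False by simp
    qed
  qed
  finally show ?thesis .
qed


lemma pb_cont: "continuous_on A (pb n m)"
  unfolding pb_def by (intro continuous_intros)

lemma pb_nonneg: "t \<in> {0..1} \<Longrightarrow> 0 \<le> pb n m t"
  unfolding pb_def by auto

lemma expect_ord:
  assumes j: "j \<le> n + 1"
  shows "(\<integral>x. ord_stat n x j \<partial>cube_measure n) = (\<Sum>m<j. integral {0..1} (pb n m))"
proof -
  define g where "g = (\<lambda>t. \<Sum>m<j. pb n m t)"
  have gc: "continuous_on {0..1} g" unfolding g_def by (intro continuous_on_sum pb_cont)
  have gi: "(g has_integral integral {0..1} g) {0..1}"
    by (rule integrable_integral) (rule integrable_continuous_interval[OF gc])
  have ig: "integral {0..1} g = (\<Sum>m<j. integral {0..1} (pb n m))"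
    unfolding g_def
    by (rule integral_sum) (auto intro: integrable_continuous_interval pb_cont)
  have "((\<lambda>t. if t \<in> {0..1} then g t else 0) has_integral integral {0..1} g) UNIV"
    using gi by (simp only: has_integral_restrict_UNIV)
  moreover have "(\<lambda>t. if t \<in> {0..1} then g t else 0) = (\<lambda>t. indicator {0..1} t * g t)"
    by (auto simp: indicator_def fun_eq_iff)
  ultimately have hi: "((\<lambda>t. indicator {0..1} t * g t) has_integral integral {0..1} g) UNIV" by simp
  have gm: "(\<lambda>t. indicator {0..1} t * g t) \<in> borel_measurable borel"
    unfolding g_def pb_def by measurable
  have gnn: "\<And>t. 0 \<le> indicator {0..1} t * g t"
    unfolding g_def using pb_nonneg by (auto simp: indicator_def intro: sum_nonneg)
  have "(\<integral>\<^sup>+t. ennreal (indicator {0..1} t * g t) \<partial>lborel) = ennreal (integral {0..1} g)"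
    by (rule nn_integral_has_integral_lborel[OF gm gnn hi])
  moreover have "(\<integral>\<^sup>+x. ennreal (ord_stat n x j) \<partial>cube_measure n) = ennreal (\<integral>x. ord_stat n x j \<partial>cube_measure n)"
    by (rule nn_integral_eq_integral[OF integrable_ord]) (auto intro!: AE_I2 dest: ord_stat_range_M[of _ n j])
  ultimately have "ennreal (\<integral>x. ord_stat n x j \<partial>cube_measure n) = ennreal (integral {0..1} g)"
    using fubini_step[OF j] unfolding g_def by simp
  moreover have "0 \<le> (\<integral>x. ord_stat n x j \<partial>cube_measure n)"
    by (rule integral_nonneg_AE) (auto intro!: AE_I2 dest: ord_stat_range_M[of _ n j])
  moreover have "0 \<le> integral {0..1} g"
    by (rule has_integral_nonneg[OF gi]) (auto simp: g_def intro!: sum_nonneg pb_nonneg)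
  ultimately show ?thesis using ig by simp
qed

lemma ibp:
  assumes k: "1 \<le> k" "k \<le> n"
  shows "integral {0..1} (pb n k) = integral {0..1} (pb n (k - 1))"
proof -
  define a where "a = k - 1"
  define b where "b = n - k"
  have ka: "k = a + 1" and nb: "n - k = b" and nk1: "n - (k - 1) = b + 1" and na: "n - a = b + 1"
    using k by (auto simp: a_def b_def)
  define A where "A = (\<lambda>t::real. t ^ (a + 1) * (1 - t) ^ b)"
  define B where "B = (\<lambda>t::real. t ^ a * (1 - t) ^ (b + 1))"
  define F where "F = (\<lambda>t::real. t ^ (a + 1) * (1 - t) ^ (b + 1))"
  have Ai: "A integrable_on {0..1}" unfolding A_def
    by (intro integrable_continuous_interval continuous_intros)
  have Bi: "B integrable_on {0..1}" unfolding B_def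
    by (intro integrable_continuous_interval continuous_intros)
  have der: "(F has_vector_derivative (real (a + 1) * B t - real (b + 1) * A t)) (at t within {0..1})" for t
  proof -
    have "(F has_real_derivative (real (a + 1) * B t - real (b + 1) * A t)) (at t within {0..1})"
      unfolding F_def A_def B_def
      by ((rule derivative_eq_intros refl | simp)+)
    then show ?thesis by (simp add: has_real_derivative_iff_has_vector_derivative)
  qed
  have "((\<lambda>t. real (a + 1) * B t - real (b + 1) * A t) has_integral (F 1 - F 0)) {0..1}"
    by (rule fundamental_theorem_of_calculus) (simp, rule der)
  moreover have "F 1 - F 0 = 0" unfolding F_def by simp
  ultimately have "integral {0..1} (\<lambda>t. real (a + 1) * B t - real (b + 1) * A t) = 0"
    by (simp add: integral_unique)
  moreover have "integral {0..1} (\<lambda>t. real (a + 1) * B t - real (b + 1) * A t)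
      = real (a + 1) * integral {0..1} B - real (b + 1) * integral {0..1} A"
    using Ai Bi by (simp add: integral_diff integral_mult_right integrable_on_cmult_left)
  ultimately have AB: "real (a + 1) * integral {0..1} B = real (b + 1) * integral {0..1} A" by simp
  have bin: "real (a + 1) * real (n choose (a + 1)) = real (b + 1) * real (n choose a)"
  proof -
    have "(a + 1) * (n choose (a + 1)) = n * ((n - 1) choose a)"
      using times_binomial_minus1_eq[of "a + 1" n] by simp
    also have "\<dots> = (n - a) * (n choose a)" by (rule binomial_absorb_comp[symmetric])
    finally show ?thesis unfolding na by (metis of_nat_mult)
  qed
  have e1: "pb n k = (\<lambda>t. real (n choose (a + 1)) * A t)"
    unfolding pb_def A_def ka[symmetric] nb by (simp add: fun_eq_iff ka)
  have e2: "pb n (k - 1) = (\<lambda>t. real (n choose a) * B t)"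
  proof -
    have ka1: "k - 1 = a" by (simp add: a_def)
    show ?thesis unfolding ka1 pb_def B_def na by (simp add: fun_eq_iff)
  qed
  have "real (b + 1) * integral {0..1} (pb n k) = real (b + 1) * integral {0..1} (pb n (k - 1))"
  proof -
    have "real (b + 1) * integral {0..1} (pb n k) = real (n choose (a + 1)) * (real (b + 1) * integral {0..1} A)"
      unfolding e1 by simp
    also have "\<dots> = real (n choose (a + 1)) * (real (a + 1) * integral {0..1} B)" by (simp only: AB)
    also have "\<dots> = (real (a + 1) * real (n choose (a + 1))) * integral {0..1} B" by simp
    also have "\<dots> = real (b + 1) * (real (n choose a) * integral {0..1} B)" unfolding bin by simp
    also have "\<dots> = real (b + 1) * integral {0..1} (pb n (k - 1))" unfolding e2 by simp
    finally show ?thesis .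
  qed
  then show ?thesis by simp
qed


definition D :: "nat \<Rightarrow> (nat \<Rightarrow> real) \<Rightarrow> nat \<Rightarrow> real" where
  "D n x k = ord_stat n x (k + 1) - 2 * ord_stat n x k + ord_stat n x (k - 1)"

lemma meas_D: "(\<lambda>x. D n x k) \<in> borel_measurable (cube_measure n)"
  unfolding D_def using meas_ord[of n] by (intro borel_measurable_add borel_measurable_diff borel_measurable_times) auto

lemma integrable_D: "integrable (cube_measure n) (\<lambda>x. D n x k)"
  unfolding D_def by (intro Bochner_Integration.integrable_add Bochner_Integration.integrable_diff integrable_mult_right integrable_ord)

lemma intD0:
  assumes k: "1 \<le> k" "k \<le> n"
  shows "(\<integral>x. D n x k \<partial>cube_measure n) = 0"
proof -
  obtain k' where k': "k = Suc k'" using k by (cases k) auto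
  define q where "q = (\<lambda>m. integral {0..1} (pb n m))"
  have "(\<integral>x. D n x k \<partial>cube_measure n) =
        (\<integral>x. ord_stat n x (k + 1) \<partial>cube_measure n) - 2 * (\<integral>x. ord_stat n x k \<partial>cube_measure n)
        + (\<integral>x. ord_stat n x (k - 1) \<partial>cube_measure n)"
    unfolding D_def
    by (simp add: Bochner_Integration.integral_add Bochner_Integration.integral_diff integrable_ord
        Bochner_Integration.integrable_diff integrable_mult_right)
  also have "\<dots> = (\<Sum>m<k+1. q m) - 2 * (\<Sum>m<k. q m) + (\<Sum>m<k-1. q m)"
    unfolding q_def using k by (simp add: expect_ord)
  also have "\<dots> = q k - q (k - 1)" unfolding k' by simp
  also have "\<dots> = 0" unfolding q_def using ibp[OF k] by simp
  finally show ?thesis .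
qed

lemma D_refl:
  assumes k: "1 \<le> k" "k \<le> n"
  shows "D n (rfl n x) k = - D n x (n - k + 1)"
proof -
  have "ord_stat n (rfl n x) (k + 1) = 1 - ord_stat n x (n - k)"
    using ord_stat_reflect[of "k + 1" n x] k unfolding rfl_def by simp
  moreover have "ord_stat n (rfl n x) k = 1 - ord_stat n x (n - k + 1)"
    using ord_stat_reflect[of k n x] k unfolding rfl_def by (simp add: Suc_diff_le)
  moreover have "ord_stat n (rfl n x) (k - 1) = 1 - ord_stat n x (n - k + 1 + 1)"
    using ord_stat_reflect[of "k - 1" n x] k unfolding rfl_def
    by (simp add: Suc_diff_le)
  moreover have "n - k + 1 - 1 = n - k" by simp
  ultimately show ?thesis unfolding D_def by simp
qed


lemma influence_D: "influence n f k = - (real n + 1) * (real n + 2) * (\<integral>x. f x * D n x k \<partial>cube_measure n)"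
  unfolding influence_def D_def ..

lemma dual_rfl: "dual_fun n f x = 1 - f (rfl n x)"
  unfolding dual_fun_def rfl_def ..

lemma D_bound: "x \<in> space (cube_measure n) \<Longrightarrow> \<bar>D n x k\<bar> \<le> 4"
proof -
  assume x: "x \<in> space (cube_measure n)"
  have "ord_stat n x (k + 1) \<in> {0..1}" "ord_stat n x k \<in> {0..1}" "ord_stat n x (k - 1) \<in> {0..1}"
    using ord_stat_range_M[OF x] by blast+
  then show ?thesis unfolding D_def by auto
qed

lemma integrable_fD:
  assumes sq: "square_integrable_cube n f"
  shows "integrable (cube_measure n) (\<lambda>x. f x * D n x k)"
proof -
  interpret prob_space "cube_measure n" by (rule prob_M)
  have fm: "f \<in> borel_measurable (cube_measure n)" using sq unfolding square_integrable_cube_def by simp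
  have fi: "integrable (cube_measure n) f"
    using sq unfolding square_integrable_cube_def by (intro square_integrable_imp_integrable[of f]) auto
  show ?thesis
  proof (rule Bochner_Integration.integrable_bound[of _ "\<lambda>x. 4 * f x"])
    show "integrable (cube_measure n) (\<lambda>x. 4 * f x)" using fi by simp
    show "(\<lambda>x. f x * D n x k) \<in> borel_measurable (cube_measure n)"
      using fm meas_D[of n k] by (rule borel_measurable_times)
    show "AE x in cube_measure n. norm (f x * D n x k) \<le> norm (4 * f x)"
    proof (rule AE_I2)
      fix x assume "x \<in> space (cube_measure n)"
      then have "\<bar>D n x k\<bar> \<le> 4" by (rule D_bound)
      then have "\<bar>f x\<bar> * \<bar>D n x k\<bar> \<le> \<bar>f x\<bar> * 4" by (intro mult_left_mono) auto
      then show "norm (f x * D n x k) \<le> norm (4 * f x)" by (simp add: abs_mult)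
    qed
  qed
qed

lemma main_dual:
  assumes sq: "square_integrable_cube n f" and k: "1 \<le> k" "k \<le> n"
  shows "influence n (dual_fun n f) k = influence n f (n - k + 1)"
proof -
  define m where "m = n - k + 1"
  have m: "1 \<le> m" "m \<le> n" and km: "n - m + 1 = k" using k by (auto simp: m_def)
  have fm: "f \<in> borel_measurable (cube_measure n)" using sq unfolding square_integrable_cube_def by simp
  define h where "h = (\<lambda>y. (1 - f y) * (- D n y m))"
  have hm: "h \<in> borel_measurable (cube_measure n)"
    unfolding h_def
    by (intro borel_measurable_times borel_measurable_diff borel_measurable_uminus borel_measurable_const fm meas_D)
  have eq: "dual_fun n f x * D n x k = h (rfl n x)" for x
  proof -
    have "D n (rfl n x) m = - D n x k" using D_refl[OF m, of x] km by simp
    then show ?thesis unfolding h_def dual_rfl by simp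
  qed
  from eq have "(\<integral>x. dual_fun n f x * D n x k \<partial>cube_measure n) = (\<integral>x. h (rfl n x) \<partial>cube_measure n)"
    by simp
  also have "\<dots> = (\<integral>x. h x \<partial>cube_measure n)" by (rule integral_refl[OF hm])
  also have "\<dots> = (\<integral>x. f x * D n x m - D n x m \<partial>cube_measure n)"
    unfolding h_def by (simp add: algebra_simps)
  also have "\<dots> = (\<integral>x. f x * D n x m \<partial>cube_measure n) - (\<integral>x. D n x m \<partial>cube_measure n)"
    by (rule Bochner_Integration.integral_diff[OF integrable_fD[OF sq] integrable_D])
  also have "\<dots> = (\<integral>x. f x * D n x m \<partial>cube_measure n)" using intD0[OF m] by simp
  finally show ?thesis unfolding influence_D m_def by simp
qed

lemma main_self:
  assumes sq: "square_integrable_cube n f" and sd: "self_dual n f" and k: "1 \<le> k" "k \<le> n"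
  shows "influence n f k = influence n f (n - k + 1)"
proof -
  have fm: "f \<in> borel_measurable (cube_measure n)" using sq unfolding square_integrable_cube_def by simp
  have dm: "dual_fun n f \<in> borel_measurable (cube_measure n)"
  proof -
    have "(\<lambda>x. f (rfl n x)) \<in> borel_measurable (cube_measure n)"
      by (rule measurable_compose[OF rfl_meas fm])
    then have "(\<lambda>x. 1 - f (rfl n x)) \<in> borel_measurable (cube_measure n)"
      by (intro borel_measurable_diff borel_measurable_const)
    then show ?thesis unfolding dual_rfl[abs_def] .
  qed
  have "(\<integral>x. f x * D n x k \<partial>cube_measure n) = (\<integral>x. dual_fun n f x * D n x k \<partial>cube_measure n)"
  proof (rule integral_cong_AE)
    show "(\<lambda>x. f x * D n x k) \<in> borel_measurable (cube_measure n)"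
      using fm meas_D[of n k] by (rule borel_measurable_times)
    show "(\<lambda>x. dual_fun n f x * D n x k) \<in> borel_measurable (cube_measure n)"
      using dm meas_D[of n k] by (rule borel_measurable_times)
    show "AE x in cube_measure n. f x * D n x k = dual_fun n f x * D n x k"
    proof (rule AE_mp)
      show "AE x in cube_measure n. dual_fun n f x = f x" using sd unfolding self_dual_def .
      show "AE x in cube_measure n. dual_fun n f x = f x \<longrightarrow> f x * D n x k = dual_fun n f x * D n x k"
        by (rule AE_I2) simp
    qed
  qed
  then have "influence n f k = influence n (dual_fun n f) k" unfolding influence_D by simp
  also have "\<dots> = influence n f (n - k + 1)" by (rule main_dual[OF sq k])
  finally show ?thesis .
qed

theorem proposition13:
  fixes n :: nat and f :: "(nat \<Rightarrow> real) \<Rightarrow> real"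
  assumes "n \<ge> 1"
    and "square_integrable_cube n f"
  shows "(\<forall>k\<in>{1..n}. influence n (dual_fun n f) k = influence n f (n - k + 1)) \<and>
         (self_dual n f \<longrightarrow> (\<forall>k\<in>{1..n}. influence n f k = influence n f (n - k + 1)))"
  using main_dual[OF assms(2)] main_self[OF assms(2)] by auto


end
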